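(* Assume the CFL condition $0\le \lambda \sup_{w\ge 1} W'(w)\le 1$, let $(y_{0,i})_{i\in\mathbb Z}$ be a bounded sequence with $y_{0,i}\ge1$, let $(w^n_i)$ be the solution of the scheme, and set $(\Delta\widehat w)^n=\sup_i|w^n_{i+1}-w^n_i|$ and $t^n=n\Delta t$. Then there is a constant $C$ independent of $n$, $\Delta z$, $\Delta t$ and $\alpha$ (e.g. $C=2\|W'\|_\infty\Phi(0)$) such that for all $n\ge0$ $$(\Delta\widehat w)^n\le (\Delta\widehat w)^0\exp\Bigl(\frac{C}{\alpha}t^n\Bigr),\qquad \sup_i|w^{n+1}_i-w^n_i|\le \lambda\,\|W'\|_\infty\,(\Delta\widehat w)^0\exp\Bigl(\frac{C}{\alpha}t^n\Bigr),$$ where $\|W'\|_\infty=\sup_{w\ge1}|W'(w)|$.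
   Context: Kernel: $\Phi:[0,\infty)\to[0,\infty)$ is non-increasing with $\int_0^\infty\Phi(z)\,dz=1$ and $\int_0^\infty z\Phi(z)\,dz<\infty$; for $\alpha>0$, $\Phi_\alpha(z)=\alpha^{-1}\Phi(z/\alpha)$. Flux: $V\in C^1([0,\infty))$ is non-increasing and $W:[1,\infty)\to\mathbb R$, $W(w)=V(1/w)$. Discretization: $\Delta z>0$, $\Delta t>0$, $\lambda=\Delta t/\Delta z$, $z_j=(j-\tfrac12)\Delta z$ for $j\in\tfrac12\mathbb Z$, and for integers $j\ge i$, $\Phi_{ij\alpha}=\int_{z_{j-1/2}}^{z_{j+1/2}}\Phi_\alpha(\zeta-z_{i-1/2})\,d\zeta$. The scheme: $w^0_i=\sum_{j\ge i}\Phi_{ij\alpha}y_{0,j}$ and $w^{n+1}_i=w^n_i+\lambda(\overline W^{\,n}_{i+1/2}-\overline W^{\,n}_{i-1/2})$ for $n\ge0$, where $\overline W^{\,n}_{i-1/2}=\sum_{j\ge i}\Phi_{ij\alpha}W(w^n_j)$. *)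

theory Defs
  imports "HOL-Analysis.Analysis"
begin

definition Phi_a :: "(real \<Rightarrow> real) \<Rightarrow> real \<Rightarrow> real \<Rightarrow> real" where
  "Phi_a Phi \<alpha> z = Phi (z / \<alpha>) / \<alpha>"

text \<open>Phi_{ij alpha} = integral over [z_{j-1/2}, z_{j+1/2}] of Phi_alpha(zeta - z_{i-1/2}),
  with z_k = (k - 1/2) dz, so z_{j-1/2} = (j-1) dz and z_{j+1/2} = j dz.\<close>
definition Phi_ij :: "(real \<Rightarrow> real) \<Rightarrow> real \<Rightarrow> real \<Rightarrow> int \<Rightarrow> int \<Rightarrow> real" where
  "Phi_ij Phi \<alpha> dz i j =
     integral {real_of_int (j - 1) * dz .. real_of_int j * dz}
       (\<lambda>\<zeta>. Phi_a Phi \<alpha> (\<zeta> - real_of_int (i - 1) * dz))"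

definition kconv :: "(real \<Rightarrow> real) \<Rightarrow> real \<Rightarrow> real \<Rightarrow> int \<Rightarrow> (int \<Rightarrow> real) \<Rightarrow> real" where
  "kconv Phi \<alpha> dz i f = (\<Sum>k. Phi_ij Phi \<alpha> dz i (i + int k) * f (i + int k))"

definition Wf :: "(real \<Rightarrow> real) \<Rightarrow> real \<Rightarrow> real" where
  "Wf V w = V (1 / w)"

primrec scheme :: "(real \<Rightarrow> real) \<Rightarrow> (real \<Rightarrow> real) \<Rightarrow> real \<Rightarrow> real \<Rightarrow> real
    \<Rightarrow> (int \<Rightarrow> real) \<Rightarrow> nat \<Rightarrow> int \<Rightarrow> real" where
  "scheme Phi V \<alpha> dz dt y0 0 = (\<lambda>i. kconv Phi \<alpha> dz i y0)"
| "scheme Phi V \<alpha> dz dt y0 (Suc n) =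
     (\<lambda>i. scheme Phi V \<alpha> dz dt y0 n i
        + (dt / dz) * (kconv Phi \<alpha> dz (i + 1) (\<lambda>j. Wf V (scheme Phi V \<alpha> dz dt y0 n j))
                       - kconv Phi \<alpha> dz i (\<lambda>j. Wf V (scheme Phi V \<alpha> dz dt y0 n j))))"

definition Dw :: "(nat \<Rightarrow> int \<Rightarrow> real) \<Rightarrow> nat \<Rightarrow> real" where
  "Dw w n = Sup (range (\<lambda>i. \<bar>w n (i + 1) - w n i\<bar>))"

end

theory Submission
  imports Defs
begin


definition gam :: "(real \<Rightarrow> real) \<Rightarrow> real \<Rightarrow> real \<Rightarrow> nat \<Rightarrow> real" where
  "gam Phi \<alpha> dz k = integral {real k * dz / \<alpha> .. real (Suc k) * dz / \<alpha>} Phi"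

lemma Phi_ij_gam:
  assumes intg: "\<And>a b. 0 \<le> a \<Longrightarrow> Phi integrable_on {a..b}"
    and \<alpha>: "\<alpha> > 0" and dz: "dz > 0"
  shows "Phi_ij Phi \<alpha> dz i (i + int k) = gam Phi \<alpha> dz k"
proof -
  define a where "a = real k * dz / \<alpha>"
  define b where "b = real (Suc k) * dz / \<alpha>"
  define c where "c = - (real_of_int (i - 1) * dz / \<alpha>)"
  have a0: "0 \<le> a" using \<alpha> dz by (simp add: a_def)
  have h: "(Phi has_integral gam Phi \<alpha> dz k) (cbox a b)"
    using integrable_integral[OF intg[OF a0, of b]] by (simp add: gam_def a_def b_def)
  have "((\<lambda>x. Phi ((1/\<alpha>) *\<^sub>R x + c)) has_integral (gam Phi \<alpha> dz k /\<^sub>R (1/\<alpha>) ^ DIM(real)))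
           (cbox ((a - c) /\<^sub>R (1/\<alpha>)) ((b - c) /\<^sub>R (1/\<alpha>)))"
    by (rule has_integral_affinity'[OF h]) (use \<alpha> in simp)
  moreover have "(a - c) /\<^sub>R (1/\<alpha>) = real_of_int (i + int k - 1) * dz"
    using \<alpha> by (simp add: a_def c_def field_simps)
  moreover have "(b - c) /\<^sub>R (1/\<alpha>) = real_of_int (i + int k) * dz"
    using \<alpha> by (simp add: b_def c_def field_simps)
  moreover have "gam Phi \<alpha> dz k /\<^sub>R (1/\<alpha>) ^ DIM(real) = gam Phi \<alpha> dz k * \<alpha>"
    by simp
  ultimately have "((\<lambda>x. Phi ((1/\<alpha>) *\<^sub>R x + c)) has_integral (gam Phi \<alpha> dz k * \<alpha>))
           {real_of_int (i + int k - 1) * dz .. real_of_int (i + int k) * dz}"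
    by (simp add: mult.commute)
  then have "((\<lambda>x. Phi ((1/\<alpha>) *\<^sub>R x + c) / \<alpha>) has_integral (gam Phi \<alpha> dz k))
           {real_of_int (i + int k - 1) * dz .. real_of_int (i + int k) * dz}"
    using has_integral_divide[of _ "gam Phi \<alpha> dz k * \<alpha>" _ \<alpha>] \<alpha> by simp
  moreover have "\<And>x. Phi ((1/\<alpha>) *\<^sub>R x + c) / \<alpha> = Phi_a Phi \<alpha> (x - real_of_int (i - 1) * dz)"
    by (simp add: Phi_a_def c_def diff_divide_distrib)
  ultimately show ?thesis unfolding Phi_ij_def by (simp add: integral_unique)
qed



context
  fixes Phi :: "real \<Rightarrow> real"
  assumes Phi_nonneg: "\<forall>z\<ge>0. Phi z \<ge> 0"
    and Phi_mono: "antimono_on {0..} Phi"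
    and Phi_int: "(Phi has_integral 1) {0..}"
begin

lemma Phi_intg: assumes "0 \<le> a" shows "Phi integrable_on {a..b}"
proof -
  have "cbox a b \<subseteq> {0..}" using assms by auto
  from integrable_on_subcbox[OF has_integral_integrable[OF Phi_int] this] show ?thesis by simp
qed

lemma Phi_le: "0 \<le> x \<Longrightarrow> x \<le> y \<Longrightarrow> Phi y \<le> Phi x"
  using Phi_mono unfolding monotone_on_def by auto

lemma int_nonneg: "0 \<le> a \<Longrightarrow> 0 \<le> integral {a..b} Phi"
  by (rule integral_nonneg[OF Phi_intg]) (use Phi_nonneg in auto)

lemma int_upper: "0 \<le> a \<Longrightarrow> a \<le> b \<Longrightarrow> integral {a..b} Phi \<le> (b - a) * Phi a"
proof -
  assume a: "0 \<le> a" "a \<le> b"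
  have "integral {a..b} Phi \<le> integral {a..b} (\<lambda>x. Phi a)"
    by (rule integral_le[OF Phi_intg[OF a(1)]]) (use a Phi_le in auto)
  then show ?thesis using a by simp
qed

lemma int_lower: "0 \<le> a \<Longrightarrow> a \<le> b \<Longrightarrow> (b - a) * Phi b \<le> integral {a..b} Phi"
proof -
  assume a: "0 \<le> a" "a \<le> b"
  have "integral {a..b} (\<lambda>x. Phi b) \<le> integral {a..b} Phi"
    by (rule integral_le[OF _ Phi_intg[OF a(1)]]) (use a Phi_le in auto)
  then show ?thesis using a by simp
qed

lemma int_le1: assumes b: "0 \<le> b" shows "integral {0..b} Phi \<le> 1"
proof -
  have "integral {0..b} Phi \<le> integral {0..} Phi"
    by (rule integral_subset_le[OF _ Phi_intg[OF order_refl] has_integral_integrable[OF Phi_int]])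
      (use Phi_nonneg in auto)
  then show ?thesis using integral_unique[OF Phi_int] by simp
qed

lemma int_tendsto: assumes h: "h > 0"
  shows "(\<lambda>m. integral {0..real m * h} Phi) \<longlonglongrightarrow> 1"
proof -
  define f where "f = (\<lambda>m x. if x \<in> {..real m * h} then Phi x else 0)"
  have I: "{..real m * h} \<inter> {0..} = {0..real m * h}" for m by auto
  have eq: "integral {0..} (f m) = integral {0..real m * h} Phi" for m
    unfolding f_def integral_restrict_Int I ..
  have "Phi integrable_on {0..} \<and> (\<lambda>m. integral {0..} (f m)) \<longlonglongrightarrow> integral {0..} Phi"
  proof (rule monotone_convergence_increasing)
    show "f m integrable_on {0..}" for m
      unfolding f_def integrable_restrict_Int I by (rule Phi_intg) simp
    show "f m x \<le> f (Suc m) x" if "x \<in> {0..}" for m x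
    proof -
      have "real m * h \<le> real (Suc m) * h" using h by simp
      moreover have "0 \<le> Phi x" using that Phi_nonneg by simp
      ultimately show ?thesis unfolding f_def by auto
    qed
    show "(\<lambda>m. f m x) \<longlonglongrightarrow> Phi x" if "x \<in> {0..}" for x
    proof (rule tendsto_eventually, rule eventually_sequentiallyI)
      fix m assume m: "nat \<lceil>x / h\<rceil> \<le> m"
      have "real (nat \<lceil>x / h\<rceil>) \<le> real m" using m by linarith
      then have "x / h \<le> real m" using real_nat_ceiling_ge[of "x/h"] by linarith
      then have "x \<le> real m * h" using h by (simp add: field_simps)
      then show "f m x = Phi x" by (simp add: f_def)
    qed
    show "bounded (range (\<lambda>m. integral {0..} (f m)))"
      unfolding bounded_iff
    proof (intro exI[of _ 1] ballI)
      fix y assume "y \<in> range (\<lambda>m. integral {0..} (f m))"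
      then obtain m where y: "y = integral {0..real m * h} Phi" using eq by auto
      have "0 \<le> y" "y \<le> 1" unfolding y
        by (rule int_nonneg, simp) (rule int_le1, use h in simp)
      then show "norm y \<le> 1" by simp
    qed
  qed
  then show ?thesis using eq integral_unique[OF Phi_int] by simp
qed

lemma gam_nonneg: "\<alpha> > 0 \<Longrightarrow> dz > 0 \<Longrightarrow> 0 \<le> gam Phi \<alpha> dz k"
  unfolding gam_def by (rule int_nonneg) simp

lemma gam_mono: assumes "\<alpha> > 0" "dz > 0" shows "gam Phi \<alpha> dz (Suc k) \<le> gam Phi \<alpha> dz k"
proof -
  define h where "h = dz / \<alpha>"
  have h: "h > 0" using assms by (simp add: h_def)
  have e: "real j * dz / \<alpha> = real j * h" for j by (simp add: h_def)
  have "gam Phi \<alpha> dz (Suc k) \<le> (real (Suc (Suc k)) * h - real (Suc k) * h) * Phi (real (Suc k) * h)"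
    unfolding gam_def e by (rule int_upper) (use h in auto)
  also have "\<dots> \<le> integral {real k * h .. real (Suc k) * h} Phi"
    using int_lower[of "real k * h" "real (Suc k) * h"] h by (simp add: algebra_simps)
  finally show ?thesis unfolding gam_def e .
qed

lemma gam0: assumes "\<alpha> > 0" "dz > 0" shows "gam Phi \<alpha> dz 0 \<le> dz / \<alpha> * Phi 0"
  using int_upper[of 0 "dz/\<alpha>"] assms by (simp add: gam_def)

lemma gam_psum: assumes "\<alpha> > 0" "dz > 0"
  shows "(\<Sum>k<N. gam Phi \<alpha> dz k) = integral {0..real N * dz / \<alpha>} Phi"
proof (induction N)
  case 0 then show ?case by simp
next
  case (Suc N)
  have "integral {0..real N * dz / \<alpha>} Phi + integral {real N * dz / \<alpha>..real (Suc N) * dz / \<alpha>} Phi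
     = integral {0..real (Suc N) * dz / \<alpha>} Phi"
    by (rule Henstock_Kurzweil_Integration.integral_combine) (use assms Phi_intg in \<open>auto simp: field_simps\<close>)
  then show ?case using Suc by (simp add: gam_def)
qed

lemma gam_sums: assumes "\<alpha> > 0" "dz > 0" shows "gam Phi \<alpha> dz sums 1"
  unfolding sums_def gam_psum[OF assms]
  using int_tendsto[of "dz/\<alpha>"] assms by (simp add: mult.commute)

lemma gam_le1: assumes "\<alpha> > 0" "dz > 0" shows "gam Phi \<alpha> dz k \<le> 1"
proof -
  have "gam Phi \<alpha> dz k \<le> (\<Sum>j<Suc k. gam Phi \<alpha> dz j)"
    by (rule member_le_sum) (use gam_nonneg assms in auto)
  also have "\<dots> \<le> 1" unfolding gam_psum[OF assms] by (rule int_le1) (use assms in simp)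
  finally show ?thesis .
qed

end


context
  fixes V V' :: "real \<Rightarrow> real"
  assumes V_deriv: "\<forall>x\<ge>0. (V has_real_derivative V' x) (at x within {0..})"
    and V'_cont: "continuous_on {0..} V'"
    and V_mono: "antimono_on {0..} V"
begin

lemma W_deriv: assumes x: "x > 0"
  shows "(Wf V has_real_derivative V' (1/x) * (- (inverse x ^ Suc (Suc 0)))) (at x)"
proof -
  have x0: "0 \<le> 1/x" using x by simp
  have dV0: "(V has_real_derivative V' (1/x)) (at (1/x) within {0..})"
    using V_deriv x0 by blast
  have dV1: "(V has_real_derivative V' (1/x)) (at (1/x) within {0<..})"
    by (rule has_field_derivative_subset[OF dV0]) auto
  have e: "at (1/x) within {0<..} = at (1/x)"
    by (rule at_within_open) (use x in auto)
  have dV: "(V has_real_derivative V' (1/x)) (at (1/x))"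
    using dV1 unfolding e .
  have ef: "(\<lambda>w::real. inverse w) = (\<lambda>w. 1/w)" by (rule ext) (simp add: inverse_eq_divide)
  have dI: "((\<lambda>w::real. 1/w) has_real_derivative - (inverse x ^ Suc (Suc 0))) (at x)"
    using DERIV_inverse[of x UNIV] x unfolding ef by simp
  have eW: "Wf V = (\<lambda>w. V (1/w))" by (rule ext) (simp add: Wf_def)
  show ?thesis unfolding eW by (rule DERIV_chain'[OF dI dV])
qed

lemma W_deriv': "x > 0 \<Longrightarrow> (Wf V has_real_derivative deriv (Wf V) x) (at x)"
  using W_deriv DERIV_imp_deriv by metis

lemma W_deriv_bound: "\<exists>M. \<forall>x\<ge>1. \<bar>deriv (Wf V) x\<bar> \<le> M"
proof -
  have "compact (V' ` {0..1})"
    by (rule compact_continuous_image[OF continuous_on_subset[OF V'_cont]]) auto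
  then obtain M where M0: "\<forall>x\<in>V' ` {0..1}. norm x \<le> M"
    using compact_imp_bounded[of "V' ` {0..1}"] unfolding bounded_iff by blast
  have M: "\<bar>V' y\<bar> \<le> M" if "y \<in> {0..1}" for y using M0 that by simp
  have "\<bar>deriv (Wf V) x\<bar> \<le> M" if x: "x \<ge> 1" for x
  proof -
    have d: "deriv (Wf V) x = V' (1/x) * (- (inverse x ^ 2))"
      using DERIV_imp_deriv[OF W_deriv[of x]] x by (simp add: numeral_2_eq_2)
    have "\<bar>V' (1/x)\<bar> \<le> M" using M x by simp
    moreover have "\<bar>inverse x ^ 2\<bar> \<le> 1"
    proof -
      have i1: "inverse x \<le> 1" "0 \<le> inverse x" using x by (auto intro: inverse_le_1_iff[THEN iffD2])
      then have "inverse x ^ 2 \<le> 1" by (intro power_le_one) auto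
      then show ?thesis using i1 by simp
    qed
    moreover have "0 \<le> M" using M[of 0] by simp
    ultimately have "\<bar>V' (1/x)\<bar> * \<bar>inverse x ^ 2\<bar> \<le> M * 1"
      by (intro mult_mono) auto
    then show ?thesis unfolding d by (simp add: abs_mult)
  qed
  then show ?thesis by blast
qed

lemma W_mono: assumes "1 \<le> a" "a \<le> b" shows "Wf V a \<le> Wf V b"
proof -
  have "inverse b \<le> inverse a" using assms by (intro le_imp_inverse_le) auto
  moreover have "0 \<le> inverse b" using assms by simp
  moreover have "0 \<le> inverse a" using assms by simp
  moreover have "\<forall>x\<in>{0..}. \<forall>y\<in>{0..}. x \<le> y \<longrightarrow> V y \<le> V x"
    using V_mono by (simp add: monotone_on_def)
  ultimately have "V (inverse a) \<le> V (inverse b)" by simp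
  then show ?thesis unfolding Wf_def by (simp add: inverse_eq_divide)
qed

lemma W_MVT:
  assumes a: "1 \<le> a" and b: "1 \<le> b" and Ls: "0 \<le> Sup (deriv (Wf V) ` {1..})"
  shows "\<exists>c. 0 \<le> c \<and> c \<le> Sup (deriv (Wf V) ` {1..}) \<and> c \<le> Sup ((\<lambda>w. \<bar>deriv (Wf V) w\<bar>) ` {1..})
      \<and> Wf V b - Wf V a = c * (b - a)"
proof -
  obtain M where M: "\<And>x. x \<ge> 1 \<Longrightarrow> \<bar>deriv (Wf V) x\<bar> \<le> M" using W_deriv_bound by blast
  have M': "deriv (Wf V) x \<le> M" if "x \<ge> 1" for x using M[OF that] by linarith
  have bdd1: "bdd_above (deriv (Wf V) ` {1..})"
    using M' by (intro bdd_aboveI[of _ M]) auto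
  have bdd2: "bdd_above ((\<lambda>w. \<bar>deriv (Wf V) w\<bar>) ` {1..})"
    using M by (intro bdd_aboveI[of _ M]) auto
  have gen: "\<exists>c. 0 \<le> c \<and> c \<le> Sup (deriv (Wf V) ` {1..}) \<and> c \<le> Sup ((\<lambda>w. \<bar>deriv (Wf V) w\<bar>) ` {1..})
      \<and> Wf V y - Wf V x = c * (y - x)" if xy: "1 \<le> x" "x < y" for x y
  proof -
    have der: "DERIV (Wf V) t :> deriv (Wf V) t" if "x \<le> t" "t \<le> y" for t
      using that xy by (intro W_deriv') linarith
    obtain z where z: "x < z" "z < y" "Wf V y - Wf V x = (y - x) * deriv (Wf V) z"
      using MVT2[OF xy(2) der] by blast
    have "0 \<le> Wf V y - Wf V x" using W_mono[of x y] xy by simp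
    then have c0: "0 \<le> deriv (Wf V) z" using z xy
      by (simp add: zero_le_mult_iff)
    have "deriv (Wf V) z \<le> Sup (deriv (Wf V) ` {1..})"
      by (rule cSup_upper[OF _ bdd1]) (use z xy in auto)
    moreover have "\<bar>deriv (Wf V) z\<bar> \<le> Sup ((\<lambda>w. \<bar>deriv (Wf V) w\<bar>) ` {1..})"
      by (rule cSup_upper[OF _ bdd2]) (use z xy in auto)
    ultimately show ?thesis using c0 z by (intro exI[of _ "deriv (Wf V) z"]) auto
  qed
  have L2: "0 \<le> Sup ((\<lambda>w. \<bar>deriv (Wf V) w\<bar>) ` {1..})"
    using cSup_upper[OF _ bdd2, of "\<bar>deriv (Wf V) 1\<bar>"] by force
  show ?thesis
  proof (cases a b rule: linorder_cases)
    case less then show ?thesis using gen[OF a less] by blast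
  next
    case equal then show ?thesis using Ls L2 by (intro exI[of _ 0]) auto
  next
    case greater
    obtain c where "0 \<le> c \<and> c \<le> Sup (deriv (Wf V) ` {1..}) \<and> c \<le> Sup ((\<lambda>w. \<bar>deriv (Wf V) w\<bar>) ` {1..})
      \<and> Wf V a - Wf V b = c * (a - b)" using gen[OF b greater] by blast
    then show ?thesis by (intro exI[of _ c]) (auto simp: algebra_simps)
  qed
qed

end


lemma abel_id:
  fixes g v :: "nat \<Rightarrow> real"
  shows "(\<Sum>k<Suc m. g k * (v (Suc k) - v k))
     = - g 0 * v 0 + (\<Sum>k<m. (g k - g (Suc k)) * v (Suc k)) + g m * v (Suc m)"
  by (induction m) (simp_all add: algebra_simps)

lemma abel_tendsto:
  fixes g v :: "nat \<Rightarrow> real"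
  assumes "(\<lambda>k. g k * (v (Suc k) - v k)) sums S"
  shows "(\<lambda>m. e - l * g 0 * v 0 + l * (\<Sum>k<m. (g k - g (Suc k)) * v (Suc k)) + l * (g m * v (Suc m)))
     \<longlonglongrightarrow> e + l * S"
proof -
  have "(\<lambda>n. \<Sum>k<n. g k * (v (Suc k) - v k)) \<longlonglongrightarrow> S" using assms unfolding sums_def .
  then have "(\<lambda>n. \<Sum>k<Suc n. g k * (v (Suc k) - v k)) \<longlonglongrightarrow> S" by (rule LIMSEQ_Suc)
  then have lim: "(\<lambda>n. e + l * (\<Sum>k<Suc n. g k * (v (Suc k) - v k))) \<longlonglongrightarrow> e + l * S"
    by (intro tendsto_intros)
  have eq: "e + l * (\<Sum>k<Suc n. g k * (v (Suc k) - v k))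
     = e - l * g 0 * v 0 + l * (\<Sum>k<n. (g k - g (Suc k)) * v (Suc k)) + l * (g n * v (Suc n))" for n
    unfolding abel_id by (simp add: algebra_simps)
  from lim show ?thesis unfolding eq .
qed

lemma tendsto_le_all: "X \<longlonglongrightarrow> (x::real) \<Longrightarrow> (\<And>n. X n \<le> a) \<Longrightarrow> x \<le> a"
  using LIMSEQ_le_const2 by blast

lemma tendsto_ge_all: "X \<longlonglongrightarrow> (x::real) \<Longrightarrow> (\<And>n. a \<le> X n) \<Longrightarrow> a \<le> x"
  using LIMSEQ_le_const by blast

lemma tendsto_abs_le_all: "X \<longlonglongrightarrow> (x::real) \<Longrightarrow> (\<And>n. \<bar>X n\<bar> \<le> a) \<Longrightarrow> \<bar>x\<bar> \<le> a"
  using tendsto_le_all[OF tendsto_rabs] by blast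


context
  fixes Phi V V' :: "real \<Rightarrow> real" and \<alpha> dz dt :: real
  assumes Phi_nonneg: "\<forall>z\<ge>0. Phi z \<ge> 0"
    and Phi_mono: "antimono_on {0..} Phi"
    and Phi_int: "(Phi has_integral 1) {0..}"
    and V_deriv: "\<forall>x\<ge>0. (V has_real_derivative V' x) (at x within {0..})"
    and V'_cont: "continuous_on {0..} V'"
    and V_mono: "antimono_on {0..} V"
    and a0: "\<alpha> > 0" and dz0: "dz > 0" and dt0: "dt > 0"
    and cfl0: "0 \<le> (dt / dz) * Sup (deriv (Wf V) ` {1..})"
    and cfl1: "(dt / dz) * Sup (deriv (Wf V) ` {1..}) \<le> 1"
begin

lemma step:
  fixes w w' :: "int \<Rightarrow> real" and M :: real
  assumes wl: "\<And>j. 1 \<le> w j" and wu: "\<And>j. w j \<le> M"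
    and w'def: "\<And>i. w' i = w i + dt / dz * (kconv Phi \<alpha> dz (i + 1) (\<lambda>j. Wf V (w j))
                                             - kconv Phi \<alpha> dz i (\<lambda>j. Wf V (w j)))"
  shows "(\<forall>i. 1 \<le> w' i \<and> w' i \<le> M)
    \<and> (\<forall>i. \<bar>w' (i + 1) - w' i\<bar> \<le> Sup (range (\<lambda>i. \<bar>w (i + 1) - w i\<bar>))
          * (1 + dt / dz * Sup ((\<lambda>w. \<bar>deriv (Wf V) w\<bar>) ` {1..}) * gam Phi \<alpha> dz 0))
    \<and> (\<forall>i. \<bar>w' i - w i\<bar> \<le> dt / dz * Sup ((\<lambda>w. \<bar>deriv (Wf V) w\<bar>) ` {1..})
          * Sup (range (\<lambda>i. \<bar>w (i + 1) - w i\<bar>)))"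
proof -
  define g where "g = gam Phi \<alpha> dz"
  define lam where "lam = dt / dz"
  define Ls where "Ls = Sup (deriv (Wf V) ` {1..})"
  define La where "La = Sup ((\<lambda>w. \<bar>deriv (Wf V) w\<bar>) ` {1..})"
  define W where "W = Wf V"
  define D where "D = Sup (range (\<lambda>i. \<bar>w (i + 1) - w i\<bar>))"
  have lam0: "0 < lam" unfolding lam_def using dt0 dz0 by simp
  have "0 \<le> lam * Ls" using cfl0 unfolding lam_def Ls_def .
  then have Ls0: "0 \<le> Ls" using lam0 by (simp add: zero_le_mult_iff)
  have cfl: "lam * Ls \<le> 1" using cfl1 unfolding lam_def Ls_def .
  have g0: "0 \<le> g k" for k
    unfolding g_def by (rule gam_nonneg[OF Phi_nonneg Phi_mono Phi_int a0 dz0])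
  have gm: "g (Suc k) \<le> g k" for k
    unfolding g_def by (rule gam_mono[OF Phi_nonneg Phi_mono Phi_int a0 dz0])
  have gle1: "g k \<le> 1" for k
    unfolding g_def by (rule gam_le1[OF Phi_nonneg Phi_mono Phi_int a0 dz0])
  have gps: "(\<Sum>k<N. g k) \<le> 1" for N
    unfolding g_def gam_psum[OF Phi_nonneg Phi_mono Phi_int a0 dz0]
    by (rule int_le1[OF Phi_nonneg Phi_mono Phi_int]) (use a0 dz0 in simp)
  have gsum: "summable g"
    unfolding g_def using gam_sums[OF Phi_nonneg Phi_mono Phi_int a0 dz0] by (rule sums_summable)
  have mvt: "\<exists>c. 0 \<le> c \<and> c \<le> Ls \<and> c \<le> La \<and> W b - W a = c * (b - a)" if "1 \<le> a" "1 \<le> b" for a b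
    unfolding W_def Ls_def La_def
    by (rule W_MVT[OF V_deriv V'_cont V_mono that]) (use Ls0 in \<open>simp add: Ls_def\<close>)
  have lamc: "lam * g 0 * c \<le> 1" "0 \<le> lam * g 0 * c" if "0 \<le> c" "c \<le> Ls" for c
  proof -
    have "lam * c \<le> lam * Ls" using that lam0 by (intro mult_left_mono) auto
    then have lc: "lam * c \<le> 1" using cfl by linarith
    have lc0: "0 \<le> lam * c" using that lam0 by simp
    have "g 0 * (lam * c) \<le> 1 * 1" using lc lc0 gle1[of 0] g0[of 0] by (intro mult_mono) auto
    then show "lam * g 0 * c \<le> 1" by (simp add: algebra_simps)
    show "0 \<le> lam * g 0 * c" using mult_nonneg_nonneg[OF g0[of 0] lc0] by (simp add: algebra_simps)
  qed
  have Wb: "\<bar>W (w j)\<bar> \<le> \<bar>W 1\<bar> + \<bar>W M\<bar>" for j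
  proof -
    have "W 1 \<le> W (w j)" unfolding W_def by (rule W_mono[OF V_deriv V'_cont V_mono]) (use wl in auto)
    moreover have "W (w j) \<le> W M" unfolding W_def by (rule W_mono[OF V_deriv V'_cont V_mono]) (use wl wu in auto)
    ultimately show ?thesis by linarith
  qed
  have kc: "kconv Phi \<alpha> dz i f = (\<Sum>k. g k * f (i + int k))" for i f
    unfolding kconv_def g_def
    using Phi_ij_gam[OF Phi_intg[OF Phi_nonneg Phi_mono Phi_int] a0 dz0] by simp
  have ksums: "(\<lambda>k. g k * f (i + int k)) sums kconv Phi \<alpha> dz i f" if fB: "\<And>j. \<bar>f j\<bar> \<le> B" for i f B
  proof -
    have "summable (\<lambda>k. g k * f (i + int k))"
    proof (rule summable_comparison_test'[of "\<lambda>k. g k * B"])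
      show "summable (\<lambda>k. g k * B)" by (rule summable_mult2[OF gsum])
      show "norm (g k * f (i + int k)) \<le> g k * B" for k
        using fB[of "i + int k"] g0[of k] by (simp add: abs_mult mult_left_mono)
    qed
    then show ?thesis unfolding kc by (rule summable_sums)
  qed
  define v where "v i k = W (w (i + int k))" for i k
  have vS: "v (i + 1) k = v i (Suc k)" for i k unfolding v_def by (simp add: algebra_simps)
  define T where "T i = kconv Phi \<alpha> dz (i + 1) (\<lambda>j. W (w j)) - kconv Phi \<alpha> dz i (\<lambda>j. W (w j))" for i
  have w'T: "w' i = w i + lam * T i" for i unfolding w'def T_def lam_def W_def ..
  have Tsums: "(\<lambda>k. g k * (v i (Suc k) - v i k)) sums T i" for i
  proof -
    have s1: "(\<lambda>k. g k * v i (Suc k)) sums kconv Phi \<alpha> dz (i + 1) (\<lambda>j. W (w j))"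
      using ksums[of "\<lambda>j. W (w j)", OF Wb, of "i+1"] unfolding v_def[symmetric] vS .
    have s2: "(\<lambda>k. g k * v i k) sums kconv Phi \<alpha> dz i (\<lambda>j. W (w j))"
      using ksums[of "\<lambda>j. W (w j)", OF Wb, of "i"] unfolding v_def[symmetric] .
    show ?thesis using sums_diff[OF s1 s2] unfolding T_def by (simp add: right_diff_distrib)
  qed
  have v0: "v i 0 = W (w i)" for i by (simp add: v_def)
  have upper: "w' i \<le> M" for i
  proof -
    obtain c where c: "0 \<le> c" "c \<le> Ls" "W M - W (w i) = c * (M - w i)"
      using mvt[OF wl[of i], of M] wl wu by (meson order.trans)
    have S': "(\<lambda>k. g k * ((v i (Suc k) - W M) - (v i k - W M))) sums T i" using Tsums[of i] by simp
    have vle: "v i k - W M \<le> 0" for k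
      unfolding v_def W_def using W_mono[OF V_deriv V'_cont V_mono wl wu] by simp
    have "w i + lam * T i \<le> M"
    proof (rule tendsto_le_all[OF abel_tendsto[OF S', of "w i" lam]])
      fix m
      have t1: "w i - lam * g 0 * (v i 0 - W M) \<le> M"
      proof -
        have e1: "v i 0 - W M = c * (w i - M)" using c(3) unfolding v0 by (simp add: algebra_simps)
        have "w i - lam * g 0 * (v i 0 - W M) - M = (w i - M) * (1 - lam * g 0 * c)"
          unfolding e1 by (simp add: algebra_simps)
        also have "\<dots> \<le> 0" using wu[of i] lamc[OF c(1,2)] by (intro mult_nonpos_nonneg) auto
        finally show ?thesis by simp
      qed
      have t2: "(\<Sum>k<m. (g k - g (Suc k)) * (v i (Suc k) - W M)) \<le> 0"
        by (rule sum_nonpos) (use gm vle in \<open>simp add: mult_nonneg_nonpos\<close>)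
      have t3: "g m * (v i (Suc m) - W M) \<le> 0" using g0[of m] vle[of "Suc m"] by (simp add: mult_nonneg_nonpos)
      have "lam * (\<Sum>k<m. (g k - g (Suc k)) * (v i (Suc k) - W M)) \<le> 0"
        using t2 lam0 by (simp add: mult_nonneg_nonpos)
      moreover have "lam * (g m * (v i (Suc m) - W M)) \<le> 0"
        using t3 lam0 by (simp add: mult_nonneg_nonpos)
      ultimately show "w i - lam * g 0 * (v i 0 - W M) + lam * (\<Sum>k<m. (g k - g (Suc k)) * (v i (Suc k) - W M))
          + lam * (g m * (v i (Suc m) - W M)) \<le> M" using t1 by linarith
    qed
    then show ?thesis unfolding w'T .
  qed
  have lower: "1 \<le> w' i" for i
  proof -
    obtain c where c: "0 \<le> c" "c \<le> Ls" "W (w i) - W 1 = c * (w i - 1)"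
      using mvt[of 1 "w i"] wl by auto
    have S': "(\<lambda>k. g k * ((v i (Suc k) - W 1) - (v i k - W 1))) sums T i" using Tsums[of i] by simp
    have vge: "0 \<le> v i k - W 1" for k
      unfolding v_def W_def using W_mono[OF V_deriv V'_cont V_mono _ wl] by simp
    have "1 \<le> w i + lam * T i"
    proof (rule tendsto_ge_all[OF abel_tendsto[OF S', of "w i" lam]])
      fix m
      have t1: "1 \<le> w i - lam * g 0 * (v i 0 - W 1)"
      proof -
        have e1: "v i 0 - W 1 = c * (w i - 1)" using c(3) unfolding v0 by (simp add: algebra_simps)
        have "w i - lam * g 0 * (v i 0 - W 1) - 1 = (w i - 1) * (1 - lam * g 0 * c)"
          unfolding e1 by (simp add: algebra_simps)
        moreover have "0 \<le> (w i - 1) * (1 - lam * g 0 * c)" using wl[of i] lamc[OF c(1,2)] by simp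
        ultimately show ?thesis by simp
      qed
      have t2: "0 \<le> (\<Sum>k<m. (g k - g (Suc k)) * (v i (Suc k) - W 1))"
        by (rule sum_nonneg) (use gm vge in simp)
      have t3: "0 \<le> g m * (v i (Suc m) - W 1)" using g0[of m] vge[of "Suc m"] by simp
      have "0 \<le> lam * (\<Sum>k<m. (g k - g (Suc k)) * (v i (Suc k) - W 1))"
        using t2 lam0 by simp
      moreover have "0 \<le> lam * (g m * (v i (Suc m) - W 1))"
        using t3 lam0 by simp
      ultimately show "1 \<le> w i - lam * g 0 * (v i 0 - W 1) + lam * (\<Sum>k<m. (g k - g (Suc k)) * (v i (Suc k) - W 1))
          + lam * (g m * (v i (Suc m) - W 1))" using t1 by linarith
    qed
    then show ?thesis unfolding w'T .
  qed
  have bddD: "bdd_above (range (\<lambda>i. \<bar>w (i + 1) - w i\<bar>))"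
  proof (rule bdd_aboveI[of _ M])
    fix x assume "x \<in> range (\<lambda>i. \<bar>w (i + 1) - w i\<bar>)"
    then obtain j where x: "x = \<bar>w (j + 1) - w j\<bar>" by auto
    show "x \<le> M" unfolding x using wl[of j] wl[of "j+1"] wu[of j] wu[of "j+1"] by linarith
  qed
  have dle: "\<bar>w (j + 1) - w j\<bar> \<le> D" for j
    unfolding D_def by (rule cSup_upper[OF _ bddD]) auto
  have D0: "0 \<le> D" using dle[of 0] by linarith
  define u where "u i k = v i (Suc k) - v i k" for i k
  have uc: "\<exists>c. 0 \<le> c \<and> c \<le> Ls \<and> c \<le> La \<and> u i k = c * (w (i + int k + 1) - w (i + int k))" for i k
  proof -
    have e: "i + int (Suc k) = i + int k + 1" by simp
    show ?thesis unfolding u_def v_def e by (rule mvt) (use wl in auto)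
  qed
  have La0: "0 \<le> La" using uc[of 0 0] by auto
  have ub: "\<bar>u i k\<bar> \<le> La * D" for i k
  proof -
    obtain c where c: "0 \<le> c" "c \<le> La" "u i k = c * (w (i + int k + 1) - w (i + int k))" using uc by blast
    have "\<bar>u i k\<bar> = c * \<bar>w (i + int k + 1) - w (i + int k)\<bar>" using c by (simp add: abs_mult)
    also have "\<dots> \<le> La * D" using c dle[of "i + int k"] D0 by (intro mult_mono) auto
    finally show ?thesis .
  qed
  have part3: "\<bar>w' i - w i\<bar> \<le> lam * La * D" for i
  proof -
    have S: "(\<lambda>k. g k * u i k) sums T i" using Tsums[of i] unfolding u_def .
    have "\<bar>T i\<bar> \<le> La * D"
    proof (rule tendsto_abs_le_all[OF S[unfolded sums_def]])
      fix N
      have "\<bar>\<Sum>k<N. g k * u i k\<bar> \<le> (\<Sum>k<N. \<bar>g k * u i k\<bar>)" by (rule sum_abs)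
      also have "\<dots> \<le> (\<Sum>k<N. g k * (La * D))"
        by (rule sum_mono) (use g0 ub in \<open>simp add: abs_mult mult_left_mono\<close>)
      also have "\<dots> = (\<Sum>k<N. g k) * (La * D)" by (simp add: sum_distrib_right)
      also have "\<dots> \<le> 1 * (La * D)" using gps[of N] La0 D0 by (intro mult_right_mono) auto
      finally show "\<bar>\<Sum>k<N. g k * u i k\<bar> \<le> La * D" by simp
    qed
    then have "lam * \<bar>T i\<bar> \<le> lam * (La * D)" using lam0 by (intro mult_left_mono) auto
    then show ?thesis using w'T[of i] lam0 by (simp add: abs_mult)
  qed
  have part2: "\<bar>w' (i + 1) - w' i\<bar> \<le> D * (1 + lam * La * g 0)" for i
  proof -
    have Ti1: "(\<lambda>k. g k * u i (Suc k)) sums T (i + 1)"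
      using Tsums[of "i+1"] unfolding vS u_def .
    have Ti: "(\<lambda>k. g k * u i k) sums T i" using Tsums[of i] unfolding u_def .
    have S: "(\<lambda>k. g k * (u i (Suc k) - u i k)) sums (T (i + 1) - T i)"
      using sums_diff[OF Ti1 Ti] by (simp add: right_diff_distrib)
    obtain c0 where c0: "0 \<le> c0" "c0 \<le> Ls" "u i 0 = c0 * (w (i + 1) - w i)" using uc[of i 0] by auto
    have "\<bar>(w (i + 1) - w i) + lam * (T (i + 1) - T i)\<bar> \<le> D * (1 + lam * La * g 0)"
    proof (rule tendsto_abs_le_all[OF abel_tendsto[OF S, of "w (i + 1) - w i" lam]])
      fix m
      have t1: "\<bar>w (i + 1) - w i - lam * g 0 * u i 0\<bar> \<le> D"
      proof -
        have "w (i + 1) - w i - lam * g 0 * u i 0 = (w (i + 1) - w i) * (1 - lam * g 0 * c0)"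
          unfolding c0(3) by (simp add: algebra_simps)
        also have "\<bar>\<dots>\<bar> = \<bar>w (i + 1) - w i\<bar> * (1 - lam * g 0 * c0)"
          using lamc[OF c0(1,2)] by (simp add: abs_mult)
        also have "\<dots> \<le> D * 1" using dle[of i] lamc[OF c0(1,2)] D0 by (intro mult_mono) auto
        finally show ?thesis by simp
      qed
      have t2: "\<bar>\<Sum>k<m. (g k - g (Suc k)) * u i (Suc k)\<bar> \<le> (g 0 - g m) * (La * D)"
      proof -
        have "\<bar>\<Sum>k<m. (g k - g (Suc k)) * u i (Suc k)\<bar> \<le> (\<Sum>k<m. \<bar>(g k - g (Suc k)) * u i (Suc k)\<bar>)"
          by (rule sum_abs)
        also have "\<dots> \<le> (\<Sum>k<m. (g k - g (Suc k)) * (La * D))"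
        proof (rule sum_mono)
          fix k
          have "0 \<le> g k - g (Suc k)" using gm[of k] by simp
          then show "\<bar>(g k - g (Suc k)) * u i (Suc k)\<bar> \<le> (g k - g (Suc k)) * (La * D)"
            using ub[of i "Suc k"] by (simp add: abs_mult mult_left_mono)
        qed
        also have "\<dots> = (g 0 - g m) * (La * D)"
          by (simp add: sum_distrib_right[symmetric] sum_lessThan_telescope')
        finally show ?thesis .
      qed
      have t3: "\<bar>g m * u i (Suc m)\<bar> \<le> g m * (La * D)"
        using ub[of i "Suc m"] g0[of m] by (simp add: abs_mult mult_left_mono)
      have "\<bar>w (i + 1) - w i - lam * g 0 * u i 0 + lam * (\<Sum>k<m. (g k - g (Suc k)) * u i (Suc k))
          + lam * (g m * u i (Suc m))\<bar>
        \<le> \<bar>w (i + 1) - w i - lam * g 0 * u i 0\<bar> + lam * \<bar>\<Sum>k<m. (g k - g (Suc k)) * u i (Suc k)\<bar>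
          + lam * \<bar>g m * u i (Suc m)\<bar>"
        using lam0 by (simp add: abs_mult abs_triangle_ineq order_trans[OF abs_triangle_ineq])
      also have "\<dots> \<le> D + lam * ((g 0 - g m) * (La * D)) + lam * (g m * (La * D))"
        using t1 t2 t3 lam0 by (intro add_mono mult_left_mono) auto
      also have "\<dots> = D * (1 + lam * La * g 0)" by (simp add: algebra_simps)
      finally show "\<bar>w (i + 1) - w i - lam * g 0 * u i 0 + lam * (\<Sum>k<m. (g k - g (Suc k)) * u i (Suc k))
          + lam * (g m * u i (Suc m))\<bar> \<le> D * (1 + lam * La * g 0)" .
    qed
    moreover have "w' (i + 1) - w' i = (w (i + 1) - w i) + lam * (T (i + 1) - T i)"
      unfolding w'T by (simp add: algebra_simps)
    ultimately show ?thesis by simp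
  qed
  show ?thesis
    using upper lower part2 part3 unfolding D_def La_def lam_def g_def by auto
qed

end

lemma La_nonneg:
  assumes V_deriv: "\<forall>x\<ge>0. (V has_real_derivative V' x) (at x within {0..})"
    and V'_cont: "continuous_on {0..} V'"
    and V_mono: "antimono_on {0..} V"
  shows "0 \<le> Sup ((\<lambda>w. \<bar>deriv (Wf V) w\<bar>) ` {1..})"
proof -
  obtain M where M: "\<And>x. x \<ge> 1 \<Longrightarrow> \<bar>deriv (Wf V) x\<bar> \<le> M"
    using W_deriv_bound[OF V_deriv V'_cont V_mono] by blast
  have bdd2: "bdd_above ((\<lambda>w. \<bar>deriv (Wf V) w\<bar>) ` {1..})"
    using M by (intro bdd_aboveI[of _ M]) auto
  have "\<bar>deriv (Wf V) 1\<bar> \<le> Sup ((\<lambda>w. \<bar>deriv (Wf V) w\<bar>) ` {1..})"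
    by (rule cSup_upper[OF _ bdd2]) auto
  then show ?thesis by linarith
qed

lemma kconv_sums:
  assumes Phi_nonneg: "\<forall>z\<ge>0. Phi z \<ge> 0"
    and Phi_mono: "antimono_on {0..} Phi"
    and Phi_int: "(Phi has_integral 1) {0..}"
    and a0: "\<alpha> > 0" and dz0: "dz > 0"
    and fB: "\<And>j. \<bar>f j\<bar> \<le> B"
  shows "(\<lambda>k. gam Phi \<alpha> dz k * f (i + int k)) sums kconv Phi \<alpha> dz i f"
proof -
  have g0: "0 \<le> gam Phi \<alpha> dz k" for k by (rule gam_nonneg[OF Phi_nonneg Phi_mono Phi_int a0 dz0])
  have gsum: "summable (gam Phi \<alpha> dz)"
    using gam_sums[OF Phi_nonneg Phi_mono Phi_int a0 dz0] by (rule sums_summable)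
  have kc: "kconv Phi \<alpha> dz i f = (\<Sum>k. gam Phi \<alpha> dz k * f (i + int k))"
    unfolding kconv_def
    using Phi_ij_gam[OF Phi_intg[OF Phi_nonneg Phi_mono Phi_int] a0 dz0] by simp
  have "summable (\<lambda>k. gam Phi \<alpha> dz k * f (i + int k))"
  proof (rule summable_comparison_test'[of "\<lambda>k. gam Phi \<alpha> dz k * B"])
    show "summable (\<lambda>k. gam Phi \<alpha> dz k * B)" by (rule summable_mult2[OF gsum])
    show "norm (gam Phi \<alpha> dz k * f (i + int k)) \<le> gam Phi \<alpha> dz k * B" for k
      using fB[of "i + int k"] g0[of k] by (simp add: abs_mult mult_left_mono)
  qed
  then show ?thesis unfolding kc by (rule summable_sums)
qed

theorem lemma2p4:
  fixes Phi V V' :: "real \<Rightarrow> real"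
  assumes Phi_nonneg: "\<forall>z\<ge>0. Phi z \<ge> 0"
    and Phi_mono: "antimono_on {0..} Phi"
    and Phi_int: "(Phi has_integral 1) {0..}"
    and Phi_moment: "(\<lambda>z. z * Phi z) integrable_on {0..}"
    and V_deriv: "\<forall>x\<ge>0. (V has_real_derivative V' x) (at x within {0..})"
    and V'_cont: "continuous_on {0..} V'"
    and V_mono: "antimono_on {0..} V"
  shows "\<exists>C::real. \<forall>dz dt \<alpha>::real. \<forall>y0::int \<Rightarrow> real.
    dz > 0 \<longrightarrow> dt > 0 \<longrightarrow> \<alpha> > 0 \<longrightarrow>
    0 \<le> (dt / dz) * Sup (deriv (Wf V) ` {1..}) \<longrightarrow>
    (dt / dz) * Sup (deriv (Wf V) ` {1..}) \<le> 1 \<longrightarrow>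
    bounded (range y0) \<longrightarrow> (\<forall>i. y0 i \<ge> 1) \<longrightarrow>
    (\<forall>n::nat.
       Dw (scheme Phi V \<alpha> dz dt y0) n
         \<le> Dw (scheme Phi V \<alpha> dz dt y0) 0 * exp (C / \<alpha> * (real n * dt))
     \<and> Sup (range (\<lambda>i. \<bar>scheme Phi V \<alpha> dz dt y0 (Suc n) i - scheme Phi V \<alpha> dz dt y0 n i\<bar>))
         \<le> (dt / dz) * Sup ((\<lambda>w. \<bar>deriv (Wf V) w\<bar>) ` {1..})
            * Dw (scheme Phi V \<alpha> dz dt y0) 0 * exp (C / \<alpha> * (real n * dt)))"
proof -
  define La where "La = Sup ((\<lambda>w. \<bar>deriv (Wf V) w\<bar>) ` {1..})"
  have La0: "0 \<le> La" unfolding La_def by (rule La_nonneg[OF V_deriv V'_cont V_mono])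
  have P0: "0 \<le> Phi 0" using Phi_nonneg by simp
  show ?thesis
  proof (intro exI[of _ "La * Phi 0"] allI impI)
    fix dz dt \<alpha> :: real and y0 :: "int \<Rightarrow> real" and n :: nat
    assume dz0: "dz > 0" and dt0: "dt > 0" and a0: "\<alpha> > 0"
      and cfl0: "0 \<le> (dt / dz) * Sup (deriv (Wf V) ` {1..})"
      and cfl1: "(dt / dz) * Sup (deriv (Wf V) ` {1..}) \<le> 1"
      and yb: "bounded (range y0)" and y1: "\<forall>i. y0 i \<ge> 1"
    define w where "w = scheme Phi V \<alpha> dz dt y0"
    define g where "g = gam Phi \<alpha> dz"
    define lam where "lam = dt / dz"
    define C where "C = La * Phi 0"
    note step' = step[OF Phi_nonneg Phi_mono Phi_int V_deriv V'_cont V_mono a0 dz0 dt0 cfl0 cfl1]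
    obtain M where M: "\<And>i. \<bar>y0 i\<bar> \<le> M" using yb unfolding bounded_iff by auto
    have y0M: "y0 i \<le> M" for i using M[of i] by linarith
    have gs: "g sums 1" unfolding g_def by (rule gam_sums[OF Phi_nonneg Phi_mono Phi_int a0 dz0])
    have w0: "1 \<le> w 0 i \<and> w 0 i \<le> M" for i
    proof -
      have S: "(\<lambda>k. g k * y0 (i + int k)) sums w 0 i"
        unfolding w_def g_def scheme.simps by (rule kconv_sums[OF Phi_nonneg Phi_mono Phi_int a0 dz0 M])
      have g0: "0 \<le> g k" for k unfolding g_def by (rule gam_nonneg[OF Phi_nonneg Phi_mono Phi_int a0 dz0])
      have s1: "(\<lambda>k. g k * 1) sums 1" using gs by simp
      have sM: "(\<lambda>k. g k * M) sums M" using sums_mult2[OF gs, of M] by simp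
      have "1 \<le> w 0 i"
        by (rule sums_le[OF _ s1 S], rule mult_left_mono) (use g0 y1 in auto)
      moreover have "w 0 i \<le> M"
        by (rule sums_le[OF _ S sM], rule mult_left_mono) (use g0 y0M in auto)
      ultimately show ?thesis by simp
    qed
    have wS: "w (Suc m) i = w m i + dt / dz * (kconv Phi \<alpha> dz (i + 1) (\<lambda>j. Wf V (w m j))
                                             - kconv Phi \<alpha> dz i (\<lambda>j. Wf V (w m j)))" for m i
      unfolding w_def by simp
    have wb: "\<forall>i. 1 \<le> w m i \<and> w m i \<le> M" for m
    proof (induction m)
      case 0 then show ?case using w0 by blast
    next
      case (Suc m)
      have "1 \<le> w m j" "w m j \<le> M" for j using Suc by auto
      from step'[of "w m" M "w (Suc m)", OF this wS] show ?case by blast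
    qed
    have st: "(\<forall>i. \<bar>w (Suc m) (i + 1) - w (Suc m) i\<bar> \<le> Dw w m * (1 + lam * La * g 0))
          \<and> (\<forall>i. \<bar>w (Suc m) i - w m i\<bar> \<le> lam * La * Dw w m)" for m
    proof -
      have "1 \<le> w m j" "w m j \<le> M" for j using wb[of m] by auto
      from step'[of "w m" M "w (Suc m)", OF this wS] show ?thesis
        unfolding Dw_def lam_def La_def g_def by blast
    qed
    have Dw0: "0 \<le> Dw w m" for m
    proof -
      have bdd: "bdd_above (range (\<lambda>i. \<bar>w m (i + 1) - w m i\<bar>))"
      proof (rule bdd_aboveI[of _ M])
        fix x assume "x \<in> range (\<lambda>i. \<bar>w m (i + 1) - w m i\<bar>)"
        then obtain j where x: "x = \<bar>w m (j + 1) - w m j\<bar>" by auto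
        have "1 \<le> w m j" "w m j \<le> M" "1 \<le> w m (j + 1)" "w m (j + 1) \<le> M" using wb[of m] by auto
        then show "x \<le> M" unfolding x abs_le_iff by linarith
      qed
      have "\<bar>w m (0 + 1) - w m 0\<bar> \<le> Dw w m"
        unfolding Dw_def by (rule cSup_upper[OF rangeI bdd])
      then show ?thesis by linarith
    qed
    have lam0: "0 < lam" unfolding lam_def using dt0 dz0 by simp
    have g00: "g 0 \<le> dz / \<alpha> * Phi 0" unfolding g_def by (rule gam0[OF Phi_nonneg Phi_mono Phi_int a0 dz0])
    have fac: "1 + lam * La * g 0 \<le> exp (C / \<alpha> * dt)"
    proof -
      have "lam * La * g 0 \<le> lam * La * (dz / \<alpha> * Phi 0)"
        using g00 lam0 La0 by (intro mult_left_mono) auto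
      also have "\<dots> = C / \<alpha> * dt" unfolding lam_def C_def using dz0 by (simp add: field_simps)
      finally show ?thesis using exp_ge_add_one_self[of "C / \<alpha> * dt"] by linarith
    qed
    have fac0: "0 \<le> 1 + lam * La * g 0"
      using lam0 La0 gam_nonneg[OF Phi_nonneg Phi_mono Phi_int a0 dz0, of 0] unfolding g_def by simp
    have Dstep: "Dw w (Suc m) \<le> Dw w m * (1 + lam * La * g 0)" for m
      unfolding Dw_def[of w "Suc m"]
      by (rule cSup_least) (use st[of m] in auto)
    have Dn: "Dw w m \<le> Dw w 0 * exp (C / \<alpha> * (real m * dt))" for m
    proof (induction m)
      case 0 then show ?case by simp
    next
      case (Suc m)
      have "Dw w (Suc m) \<le> Dw w m * (1 + lam * La * g 0)" by (rule Dstep)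
      also have "\<dots> \<le> Dw w 0 * exp (C / \<alpha> * (real m * dt)) * exp (C / \<alpha> * dt)"
        using Suc fac fac0 Dw0[of m] by (intro mult_mono) auto
      also have "\<dots> = Dw w 0 * exp (C / \<alpha> * (real (Suc m) * dt))"
        by (simp add: mult.assoc exp_add[symmetric] algebra_simps)
      finally show ?case .
    qed
    have "Sup (range (\<lambda>i. \<bar>w (Suc n) i - w n i\<bar>)) \<le> lam * La * Dw w n"
      by (rule cSup_least) (use st[of n] in auto)
    also have "\<dots> \<le> lam * La * (Dw w 0 * exp (C / \<alpha> * (real n * dt)))"
      using Dn[of n] lam0 La0 by (intro mult_left_mono) auto
    finally have "Sup (range (\<lambda>i. \<bar>w (Suc n) i - w n i\<bar>)) \<le> lam * La * Dw w 0 * exp (C / \<alpha> * (real n * dt))"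
      by (simp add: mult.assoc)
    then show "Dw (scheme Phi V \<alpha> dz dt y0) n
         \<le> Dw (scheme Phi V \<alpha> dz dt y0) 0 * exp (La * Phi 0 / \<alpha> * (real n * dt))
     \<and> Sup (range (\<lambda>i. \<bar>scheme Phi V \<alpha> dz dt y0 (Suc n) i - scheme Phi V \<alpha> dz dt y0 n i\<bar>))
         \<le> (dt / dz) * Sup ((\<lambda>w. \<bar>deriv (Wf V) w\<bar>) ` {1..})
            * Dw (scheme Phi V \<alpha> dz dt y0) 0 * exp (La * Phi 0 / \<alpha> * (real n * dt))"
      using Dn[of n] unfolding w_def C_def lam_def La_def by simp
  qed
qed

end
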